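(* Let $f:\mathbb{R}^N\to\mathbb{R}_{++}\cup\{\infty\}$ be a standard interference function and let $f_\infty:\mathbb{R}^N\to\mathbb{R}\cup\{\infty\}$ be its asymptotic function. Then: (i) For every $\mathbf{x}\in\mathbb{R}_+^N$, $f_\infty(\mathbf{x})=\lim_{h\to\infty}f(h\mathbf{x})/h\in\mathbb{R}_+$. (ii) $f_\infty$ is lower semicontinuous and positively homogeneous. If, in addition, $f$ is continuous when restricted to $\mathbb{R}_+^N$, then $f_\infty$ is continuous when restricted to $\mathbb{R}_+^N$. (iii) For all $\mathbf{x}_1,\mathbf{x}_2\in\mathbb{R}_+^N$, $\mathbf{x}_1\ge\mathbf{x}_2$ implies $f_\infty(\mathbf{x}_2)\le f_\infty(\mathbf{x}_1)$. (iv) If $f$ is continuous when restricted to $\mathbb{R}_+^N$, then for every $\mathbf{x}\in\mathbb{R}_+^N$ and all sequences $(\mathbf{x}_n)_{n\in\mathbb{N}}\subset\mathbb{R}_+^N$ and $(h_n)_{n\in\mathbb{N}}\subset\mathbb{R}_{++}$ with $\mathbf{x}_n\to\mathbf{x}$ and $h_n\to\infty$, we have $f_\infty(\mathbf{x})=\lim_{n\to\infty}f(h_n\mathbf{x}_n)/h_n$. (v) If $f$ is concave when restricted to $\mathbb{R}_+^N$, then $f_\infty$ is concave when restricted to $\mathbb{R}_+^N$.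
   Context: Vector inequalities are coordinatewise; $\mathbb{R}_+$, $\mathbb{R}_{++}$ denote nonnegative and positive reals. A function $f:\mathbb{R}^N\to\mathbb{R}_{++}\cup\{\infty\}$ is a standard interference function if: (1) for all $\mathbf{x}\in\mathbb{R}_+^N$ and all $\alpha>1$, $\alpha f(\mathbf{x})>f(\alpha\mathbf{x})$; (2) for all $\mathbf{x}_1,\mathbf{x}_2\in\mathbb{R}_+^N$, $\mathbf{x}_1\ge\mathbf{x}_2$ implies $f(\mathbf{x}_1)\ge f(\mathbf{x}_2)$; (3) $f(\mathbf{x})=\infty$ iff $\mathbf{x}\notin\mathbb{R}_+^N$. For a proper function $f:\mathbb{R}^N\to\mathbb{R}\cup\{\infty\}$ (i.e., finite somewhere), its asymptotic function is $f_\infty(\mathbf{x})=\inf\{\liminf_{n\to\infty} f(h_n\mathbf{x}_n)/h_n : (h_n)\subset\mathbb{R},\ h_n\to\infty,\ (\mathbf{x}_n)\subset\mathbb{R}^N,\ \mathbf{x}_n\to\mathbf{x}\}$, equivalently $f_\infty(\mathbf{x})=\liminf_{h\to\infty,\mathbf{y}\to\mathbf{x}} f(h\mathbf{y})/h$. Continuity (resp. concavity) "when restricted to $\mathbb{R}_+^N$" refers to the restriction of the function to $\mathbb{R}_+^N$. *)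

theory Defs
  imports "HOL-Analysis.Analysis" "HOL-Library.Extended_Real"
begin

definition nonneg_orthant :: "(real ^ 'n) set" where
  "nonneg_orthant = {x. \<forall>i. 0 \<le> x $ i}"

definition standard_interference :: "(real ^ 'n \<Rightarrow> ereal) \<Rightarrow> bool" where
  "standard_interference f \<longleftrightarrow>
     (\<forall>x. 0 < f x) \<and>
     (\<forall>x \<in> nonneg_orthant. \<forall>\<alpha>::real. \<alpha> > 1 \<longrightarrow> ereal \<alpha> * f x > f (\<alpha> *\<^sub>R x)) \<and>
     (\<forall>x1 \<in> nonneg_orthant. \<forall>x2 \<in> nonneg_orthant. x1 \<ge> x2 \<longrightarrow> f x1 \<ge> f x2) \<and>
     (\<forall>x. f x = \<infinity> \<longleftrightarrow> x \<notin> nonneg_orthant)"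

definition asymptotic_fun :: "(real ^ 'n \<Rightarrow> ereal) \<Rightarrow> real ^ 'n \<Rightarrow> ereal" where
  "asymptotic_fun f x =
     (INF p \<in> {(h, xs). filterlim h at_top sequentially \<and> xs \<longlonglongrightarrow> x}.
        liminf (\<lambda>n. f (fst p n *\<^sub>R snd p n) / ereal (fst p n)))"

definition lower_semicontinuous :: "('a::topological_space \<Rightarrow> ereal) \<Rightarrow> bool" where
  "lower_semicontinuous g \<longleftrightarrow> (\<forall>x c. c < g x \<longrightarrow> (\<forall>\<^sub>F y in nhds x. c < g y))"

definition positively_homogeneous :: "('a::real_vector \<Rightarrow> ereal) \<Rightarrow> bool" where
  "positively_homogeneous g \<longleftrightarrow> (\<forall>x. \<forall>\<alpha>::real. \<alpha> > 0 \<longrightarrow> g (\<alpha> *\<^sub>R x) = ereal \<alpha> * g x)"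

end

theory Submission
  imports Defs
begin

definition asL :: "(real ^ 'n \<Rightarrow> ereal) \<Rightarrow> real ^ 'n \<Rightarrow> real" where
  "asL f x = Inf ((\<lambda>h. real_of_ereal (f (h *\<^sub>R x)) / h) ` {0<..})"

lemma si_pos: "standard_interference f \<Longrightarrow> 0 < f x"
  unfolding standard_interference_def by blast

lemma si_notin: "standard_interference f \<Longrightarrow> x \<notin> nonneg_orthant \<Longrightarrow> f x = \<infinity>"
  unfolding standard_interference_def by blast

lemma si_fin: "standard_interference f \<Longrightarrow> x \<in> nonneg_orthant \<Longrightarrow> f x = ereal (real_of_ereal (f x))"
proof -
  assume a: "standard_interference f" "x \<in> nonneg_orthant"
  then have "f x \<noteq> \<infinity>" "0 < f x" unfolding standard_interference_def by blast+
  then show ?thesis by (cases "f x") auto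
qed

lemma si_rpos: "standard_interference f \<Longrightarrow> x \<in> nonneg_orthant \<Longrightarrow> 0 < real_of_ereal (f x)"
proof -
  assume a: "standard_interference f" "x \<in> nonneg_orthant"
  define r where "r = real_of_ereal (f x)"
  have e: "f x = ereal r" unfolding r_def by (rule si_fin[OF a])
  have "0 < f x" by (rule si_pos[OF a(1)])
  then show ?thesis unfolding r_def[symmetric] e by simp
qed

lemma si_mono: "standard_interference f \<Longrightarrow> x1 \<in> nonneg_orthant \<Longrightarrow> x2 \<in> nonneg_orthant \<Longrightarrow> x2 \<le> x1
   \<Longrightarrow> real_of_ereal (f x2) \<le> real_of_ereal (f x1)"
proof -
  assume a: "standard_interference f" "x1 \<in> nonneg_orthant" "x2 \<in> nonneg_orthant" "x2 \<le> x1"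
  define r1 where "r1 = real_of_ereal (f x1)"
  define r2 where "r2 = real_of_ereal (f x2)"
  have e1: "f x1 = ereal r1" unfolding r1_def by (rule si_fin[OF a(1,2)])
  have e2: "f x2 = ereal r2" unfolding r2_def by (rule si_fin[OF a(1,3)])
  have "f x2 \<le> f x1" using a unfolding standard_interference_def by blast
  then show ?thesis unfolding r1_def[symmetric] r2_def[symmetric] e1 e2 by simp
qed

lemma si_scal: "standard_interference f \<Longrightarrow> x \<in> nonneg_orthant \<Longrightarrow> 1 < a
   \<Longrightarrow> real_of_ereal (f (a *\<^sub>R x)) < a * real_of_ereal (f x)"
proof -
  assume as: "standard_interference f" "x \<in> nonneg_orthant" "1 < a"
  have "f (a *\<^sub>R x) < ereal a * f x" using as unfolding standard_interference_def by blast
  moreover have ax: "a *\<^sub>R x \<in> nonneg_orthant" using as by (auto simp: nonneg_orthant_def)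
  define r1 where "r1 = real_of_ereal (f x)"
  define r2 where "r2 = real_of_ereal (f (a *\<^sub>R x))"
  have e1: "f x = ereal r1" unfolding r1_def by (rule si_fin[OF as(1,2)])
  have e2: "f (a *\<^sub>R x) = ereal r2" unfolding r2_def by (rule si_fin[OF as(1) ax])
  ultimately show ?thesis unfolding r1_def[symmetric] r2_def[symmetric] e1 e2 by simp
qed

lemma O_scale: "x \<in> nonneg_orthant \<Longrightarrow> 0 \<le> c \<Longrightarrow> c *\<^sub>R x \<in> nonneg_orthant"
  by (auto simp: nonneg_orthant_def)

lemma O_convex: "convex nonneg_orthant"
  unfolding convex_def nonneg_orthant_def by auto

lemma si_dec: "standard_interference f \<Longrightarrow> x \<in> nonneg_orthant \<Longrightarrow> 0 < h \<Longrightarrow> h \<le> h'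
  \<Longrightarrow> real_of_ereal (f (h' *\<^sub>R x)) / h' \<le> real_of_ereal (f (h *\<^sub>R x)) / h"
proof (cases "h = h'")
  case False
  assume as: "standard_interference f" "x \<in> nonneg_orthant" "0 < h" "h \<le> h'"
  then have a1: "1 < h' / h" using False by (simp add: field_simps)
  have hx: "h *\<^sub>R x \<in> nonneg_orthant" by (rule O_scale) (use as in auto)
  have eq: "(h'/h) *\<^sub>R (h *\<^sub>R x) = h' *\<^sub>R x" using as by simp
  have "real_of_ereal (f (h' *\<^sub>R x)) < (h'/h) * real_of_ereal (f (h *\<^sub>R x))"
    using si_scal[OF as(1) hx a1] unfolding eq .
  then show ?thesis using as by (simp add: field_simps)
qed simp

lemma L_term_pos: "standard_interference f \<Longrightarrow> x \<in> nonneg_orthant \<Longrightarrow> 0 < h \<Longrightarrow>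
  0 < real_of_ereal (f (h *\<^sub>R x)) / h"
  by (intro divide_pos_pos si_rpos O_scale) auto

lemma L_bdd: "standard_interference f \<Longrightarrow> x \<in> nonneg_orthant \<Longrightarrow>
   bdd_below ((\<lambda>h. real_of_ereal (f (h *\<^sub>R x)) / h) ` {0<..})"
  by (rule bdd_belowI[where m=0]) (auto intro!: less_imp_le L_term_pos)

lemma L_le: "standard_interference f \<Longrightarrow> x \<in> nonneg_orthant \<Longrightarrow> 0 < h \<Longrightarrow>
   asL f x \<le> real_of_ereal (f (h *\<^sub>R x)) / h"
  unfolding asL_def by (rule cInf_lower) (auto intro: L_bdd)

lemma L_nonneg: "standard_interference f \<Longrightarrow> x \<in> nonneg_orthant \<Longrightarrow> 0 \<le> asL f x"
  unfolding asL_def by (rule cInf_greatest) (auto intro!: less_imp_le L_term_pos)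

lemma L_lim: "standard_interference f \<Longrightarrow> x \<in> nonneg_orthant \<Longrightarrow>
   ((\<lambda>h. real_of_ereal (f (h *\<^sub>R x)) / h) \<longlongrightarrow> asL f x) at_top"
proof (rule order_tendstoI)
  assume as: "standard_interference f" "x \<in> nonneg_orthant"
  fix a assume "a < asL f x"
  moreover have "eventually (\<lambda>h. asL f x \<le> real_of_ereal (f (h *\<^sub>R x)) / h) at_top"
    using eventually_gt_at_top[of 0] by eventually_elim (rule L_le[OF as])
  ultimately show "eventually (\<lambda>h. a < real_of_ereal (f (h *\<^sub>R x)) / h) at_top"
    by (auto elim: eventually_mono)
next
  assume as: "standard_interference f" "x \<in> nonneg_orthant"
  fix a assume "asL f x < a"
  then obtain h0 where h0: "h0 > 0" "real_of_ereal (f (h0 *\<^sub>R x)) / h0 < a"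
    unfolding asL_def by (subst (asm) cInf_less_iff) (auto intro: L_bdd[OF as])
  show "eventually (\<lambda>h. real_of_ereal (f (h *\<^sub>R x)) / h < a) at_top"
    using eventually_ge_at_top[of h0] by eventually_elim (use si_dec[OF as h0(1)] h0 in fastforce)
qed

lemma eventually_above:
  fixes xs :: "'a \<Rightarrow> real ^ 'n"
  assumes xs: "(xs \<longlongrightarrow> x) F" and t: "t < 1"
  shows "eventually (\<lambda>n. \<forall>i. 0 < x $ i \<longrightarrow> t * x $ i < xs n $ i) F"
proof (rule eventually_all_finite)
  fix i
  show "eventually (\<lambda>n. 0 < x $ i \<longrightarrow> t * x $ i < xs n $ i) F"
  proof (cases "0 < x $ i")
    case True
    have "((\<lambda>n. xs n $ i) \<longlongrightarrow> x $ i) F" using xs by (rule tendsto_vec_nth)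
    moreover have "0 < (1 - t) * x $ i" using True t by simp
    then have "t * x $ i < x $ i" by (simp add: algebra_simps)
    ultimately have "eventually (\<lambda>n. t * x $ i < xs n $ i) F" by (rule order_tendstoD(1))
    then show ?thesis by (rule eventually_mono) simp
  next
    case False then show ?thesis by simp
  qed
qed

lemma above_le:
  assumes "y \<in> nonneg_orthant" "\<forall>i. 0 < x $ i \<longrightarrow> t * x $ i < y $ i" "x \<in> nonneg_orthant"
  shows "t *\<^sub>R x \<le> y"
  unfolding less_eq_vec_def
proof
  fix i
  show "(t *\<^sub>R x) $ i \<le> y $ i"
  proof (cases "0 < x $ i")
    case True then show ?thesis using assms(2) by auto
  next
    case False
    moreover have "0 \<le> x $ i" using assms(3) unfolding nonneg_orthant_def by blast
    ultimately have "x $ i = 0" by linarith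
    then show ?thesis using assms(1) unfolding nonneg_orthant_def by simp
  qed
qed

lemma val_eq: "standard_interference f \<Longrightarrow> z \<in> nonneg_orthant \<Longrightarrow> 0 < c \<Longrightarrow>
   f z / ereal c = ereal (real_of_ereal (f z) / c)"
proof -
  assume a: "standard_interference f" "z \<in> nonneg_orthant" "0 < c"
  define r where "r = real_of_ereal (f z)"
  have e: "f z = ereal r" unfolding r_def by (rule si_fin[OF a(1,2)])
  show ?thesis unfolding r_def[symmetric] e using a(3) by simp
qed

lemma inf_div: "0 < c \<Longrightarrow> \<infinity> / ereal c = \<infinity>"
  by simp

lemma at_top_pos: "filterlim h at_top F \<Longrightarrow> eventually (\<lambda>n. 0 < (h n::real)) F"
  by (simp add: filterlim_at_top_dense)

lemma L_lower:
  assumes sif: "standard_interference f" and x: "x \<in> nonneg_orthant"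
    and h: "filterlim h at_top F" and xs: "(xs \<longlongrightarrow> x) F" and y: "y < ereal (asL f x)"
  shows "eventually (\<lambda>n. y < f (h n *\<^sub>R xs n) / ereal (h n)) F"
proof -
  have L0: "0 \<le> asL f x" by (rule L_nonneg[OF sif x])
  obtain t where t: "0 < t" "t < 1" "y < ereal (t * asL f x)"
  proof (cases y)
    case (real r)
    show thesis
    proof (cases "r < 0")
      case True then show thesis using that[of "1/2"] L0 real by simp
    next
      case False
      then have L: "0 < asL f x" "r < asL f x" using y real by auto
      define t where "t = (1 + r / asL f x) / 2"
      have "r / asL f x < 1" using L by simp
      moreover have "0 \<le> r / asL f x" using False L by simp
      moreover have "t * asL f x = (asL f x + r) / 2" unfolding t_def using L by (simp add: field_simps)
      ultimately show thesis using that[of t] L real unfolding t_def by simp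
    qed
  next
    case PInf then show thesis using y by simp
  next
    case MInf then show thesis using that[of "1/2"] by simp
  qed
  have ev: "eventually (\<lambda>n. 0 < h n) F" using h by (rule at_top_pos)
  note ev2 = eventually_above[OF xs t(2)]
  show ?thesis using ev ev2
  proof eventually_elim
    case (elim n)
    show ?case
    proof (cases "xs n \<in> nonneg_orthant")
      case False
      have "h n *\<^sub>R xs n \<notin> nonneg_orthant"
      proof
        assume "h n *\<^sub>R xs n \<in> nonneg_orthant"
        then have "(1 / h n) *\<^sub>R (h n *\<^sub>R xs n) \<in> nonneg_orthant" by (rule O_scale) (use elim in simp)
        then show False using False elim by simp
      qed
      then have inf: "f (h n *\<^sub>R xs n) / ereal (h n) = \<infinity>" using si_notin[OF sif] elim by simp
      have "ereal (asL f x) < \<infinity>" by simp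
      with y have "y < \<infinity>" by (rule order.strict_trans)
      then show ?thesis unfolding inf .
    next
      case True
      have le: "t *\<^sub>R x \<le> xs n" by (rule above_le) (use True elim x in auto)
      have hx: "(h n * t) *\<^sub>R x \<in> nonneg_orthant" by (rule O_scale[OF x]) (use elim t in simp)
      have hxs: "h n *\<^sub>R xs n \<in> nonneg_orthant" by (rule O_scale[OF True]) (use elim in simp)
      have "(h n * t) *\<^sub>R x \<le> h n *\<^sub>R xs n"
        using le elim unfolding less_eq_vec_def by (auto intro: mult_left_mono)
      then have m: "real_of_ereal (f ((h n * t) *\<^sub>R x)) \<le> real_of_ereal (f (h n *\<^sub>R xs n))"
        by (rule si_mono[OF sif hxs hx])
      have "asL f x \<le> real_of_ereal (f ((h n * t) *\<^sub>R x)) / (h n * t)"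
        by (rule L_le[OF sif x]) (use elim t in simp)
      then have "(h n * t) * asL f x \<le> real_of_ereal (f ((h n * t) *\<^sub>R x))"
        using elim t by (simp add: field_simps)
      then have "h n * (t * asL f x) \<le> real_of_ereal (f (h n *\<^sub>R xs n))" using m by simp
      then have "t * asL f x \<le> real_of_ereal (f (h n *\<^sub>R xs n)) / h n"
        using elim by (simp add: field_simps)
      then show ?thesis using t(3) val_eq[OF sif hxs elim(1)] by (simp add: order_less_le_trans)
    qed
  qed
qed

lemma asym_in:
  assumes sif: "standard_interference f" and x: "x \<in> nonneg_orthant"
  shows "asymptotic_fun f x = ereal (asL f x)"
proof (rule antisym)
  have lim1: "((\<lambda>n. real_of_ereal (f (real n *\<^sub>R x)) / real n) \<longlongrightarrow> asL f x) sequentially"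
    by (rule filterlim_compose[OF L_lim[OF sif x] filterlim_real_sequentially])
  have lim2: "((\<lambda>n. ereal (real_of_ereal (f (real n *\<^sub>R x)) / real n)) \<longlongrightarrow> ereal (asL f x)) sequentially"
    using lim1 by (rule tendsto_ereal)
  have evq: "eventually (\<lambda>n. ereal (real_of_ereal (f (real n *\<^sub>R x)) / real n) = f (real n *\<^sub>R x) / ereal (real n)) sequentially"
    using eventually_gt_at_top[of "0::nat"]
  proof eventually_elim
    case (elim n)
    then show ?case using val_eq[OF sif O_scale[OF x], of "real n" "real n"] by simp
  qed
  have lim3: "((\<lambda>n. f (real n *\<^sub>R x) / ereal (real n)) \<longlongrightarrow> ereal (asL f x)) sequentially"
    by (rule Lim_transform_eventually[OF lim2 evq])
  have mem: "(\<lambda>n. real n, \<lambda>n. x) \<in> {(h, xs). filterlim h at_top sequentially \<and> xs \<longlonglongrightarrow> x}"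
    using filterlim_real_sequentially by auto
  show "asymptotic_fun f x \<le> ereal (asL f x)"
    unfolding asymptotic_fun_def
    by (rule INF_lower2[OF mem]) (simp add: lim_imp_Liminf[OF _ lim3])
next
  show "ereal (asL f x) \<le> asymptotic_fun f x"
    unfolding asymptotic_fun_def
  proof (rule INF_greatest, clarsimp)
    fix h :: "nat \<Rightarrow> real" and xs
    assume h: "filterlim h at_top sequentially" and xs: "xs \<longlonglongrightarrow> x"
    show "ereal (asL f x) \<le> liminf (\<lambda>n. f (h n *\<^sub>R xs n) / ereal (h n))"
      unfolding le_Liminf_iff using L_lower[OF sif x h xs] by blast
  qed
qed

lemma asym_out:
  assumes sif: "standard_interference f" and x: "x \<notin> nonneg_orthant"
  shows "asymptotic_fun f x = \<infinity>"
proof -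
  obtain i where i: "x $ i < 0" using x unfolding nonneg_orthant_def by (auto simp: not_le)
  have "\<infinity> \<le> asymptotic_fun f x"
    unfolding asymptotic_fun_def
  proof (rule INF_greatest, clarsimp)
    fix h :: "nat \<Rightarrow> real" and xs
    assume h: "filterlim h at_top sequentially" and xs: "xs \<longlonglongrightarrow> x"
    have e1: "eventually (\<lambda>n. 0 < h n) sequentially" using h by (rule at_top_pos)
    have "((\<lambda>n. xs n $ i) \<longlongrightarrow> x $ i) sequentially" using xs by (rule tendsto_vec_nth)
    then have e2: "eventually (\<lambda>n. xs n $ i < 0) sequentially" using i by (rule order_tendstoD(2))
    have "eventually (\<lambda>n. f (h n *\<^sub>R xs n) / ereal (h n) = \<infinity>) sequentially"
      using e1 e2
    proof eventually_elim
      case (elim n)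
      then have "h n * xs n $ i < 0" by (simp add: mult_pos_neg)
      then have "h n *\<^sub>R xs n \<notin> nonneg_orthant" unfolding nonneg_orthant_def by (auto simp: not_le)
      then show ?case using si_notin[OF sif] elim by simp
    qed
    then have "((\<lambda>n. f (h n *\<^sub>R xs n) / ereal (h n)) \<longlongrightarrow> \<infinity>) sequentially"
      by (rule tendsto_eventually)
    then show "liminf (\<lambda>n. f (h n *\<^sub>R xs n) / ereal (h n)) = \<infinity>"
      by (rule lim_imp_Liminf[rotated]) simp
  qed
  then show ?thesis by (simp add: top_unique)
qed

lemma exists_t:
  assumes L0: "0 \<le> (L::real)" and y: "y < ereal L"
  obtains t where "0 < t" "t < 1" "y < ereal (t * L)"
proof (cases y)
  case (real r)
  show thesis
  proof (cases "r < 0")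
    case True then show thesis using that[of "1/2"] L0 real by simp
  next
    case False
    then have L: "0 < L" "r < L" using y real by auto
    define t where "t = (1 + r / L) / 2"
    have "r / L < 1" using L by simp
    moreover have "0 \<le> r / L" using False L by simp
    moreover have "t * L = (L + r) / 2" unfolding t_def using L by (simp add: field_simps)
    ultimately show thesis using that[of t] L real unfolding t_def by simp
  qed
next
  case PInf then show thesis using y by simp
next
  case MInf then show thesis using that[of "1/2"] by simp
qed

lemma L_hom:
  assumes sif: "standard_interference f" and x: "x \<in> nonneg_orthant" and a: "0 < \<alpha>"
  shows "asL f (\<alpha> *\<^sub>R x) = \<alpha> * asL f x"
proof -
  have ax: "\<alpha> *\<^sub>R x \<in> nonneg_orthant" using O_scale[OF x] a by simp
  have lim_a: "((\<lambda>h. real_of_ereal (f (h *\<^sub>R (\<alpha> *\<^sub>R x))) / h) \<longlongrightarrow> asL f (\<alpha> *\<^sub>R x)) at_top"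
    by (rule L_lim[OF sif ax])
  have fl: "filterlim (\<lambda>h. \<alpha> * h) at_top at_top"
    by (rule filterlim_tendsto_pos_mult_at_top[OF tendsto_const a filterlim_ident])
  have "((\<lambda>h. real_of_ereal (f ((\<alpha> * h) *\<^sub>R x)) / (\<alpha> * h)) \<longlongrightarrow> asL f x) at_top"
    by (rule filterlim_compose[OF L_lim[OF sif x] fl])
  then have lim_b: "((\<lambda>h. \<alpha> * (real_of_ereal (f ((\<alpha> * h) *\<^sub>R x)) / (\<alpha> * h))) \<longlongrightarrow> \<alpha> * asL f x) at_top"
    by (rule tendsto_mult_left)
  have ev: "eventually (\<lambda>h. \<alpha> * (real_of_ereal (f ((\<alpha> * h) *\<^sub>R x)) / (\<alpha> * h)) =
      real_of_ereal (f (h *\<^sub>R (\<alpha> *\<^sub>R x))) / h) at_top"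
    using eventually_gt_at_top[of 0]
    by eventually_elim (use a in \<open>simp add: mult.commute\<close>)
  have "((\<lambda>h. real_of_ereal (f (h *\<^sub>R (\<alpha> *\<^sub>R x))) / h) \<longlongrightarrow> \<alpha> * asL f x) at_top"
    by (rule Lim_transform_eventually[OF lim_b ev])
  from tendsto_unique[OF _ lim_a this] show ?thesis by simp
qed

lemma L_mono:
  assumes sif: "standard_interference f" and x1: "x1 \<in> nonneg_orthant" and x2: "x2 \<in> nonneg_orthant"
    and le: "x2 \<le> x1"
  shows "asL f x2 \<le> asL f x1"
proof (rule tendsto_le[OF trivial_limit_at_top_linorder L_lim[OF sif x1] L_lim[OF sif x2]])
  show "eventually (\<lambda>h. real_of_ereal (f (h *\<^sub>R x2)) / h \<le> real_of_ereal (f (h *\<^sub>R x1)) / h) at_top"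
    using eventually_gt_at_top[of 0]
  proof eventually_elim
    case (elim h)
    have "h *\<^sub>R x2 \<le> h *\<^sub>R x1" using le elim unfolding less_eq_vec_def by (auto intro: mult_left_mono)
    moreover have "h *\<^sub>R x1 \<in> nonneg_orthant" "h *\<^sub>R x2 \<in> nonneg_orthant"
      using O_scale[OF x1] O_scale[OF x2] elim by auto
    ultimately have "real_of_ereal (f (h *\<^sub>R x2)) \<le> real_of_ereal (f (h *\<^sub>R x1))"
      using si_mono[OF sif] by blast
    then show ?case using elim by (simp add: divide_right_mono)
  qed
qed

lemma asym_nonneg: "standard_interference f \<Longrightarrow> 0 \<le> asymptotic_fun f y"
  by (cases "y \<in> nonneg_orthant") (auto simp: asym_in asym_out L_nonneg)

lemma asym_lsc:
  fixes f :: "real ^ 'n \<Rightarrow> ereal"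
  assumes sif: "standard_interference f"
  shows "lower_semicontinuous (asymptotic_fun f)"
  unfolding lower_semicontinuous_def
proof (intro allI impI)
  fix x :: "real ^ 'n" and c :: ereal
  assume c: "c < asymptotic_fun f x"
  have idn: "((\<lambda>y. y) \<longlongrightarrow> x) (nhds x)" by (rule filterlim_ident)
  show "eventually (\<lambda>y. c < asymptotic_fun f y) (nhds x)"
  proof (cases "x \<in> nonneg_orthant")
    case False
    obtain i where i: "x $ i < 0" using False unfolding nonneg_orthant_def by (auto simp: not_le)
    have "((\<lambda>y. y $ i) \<longlongrightarrow> x $ i) (nhds x)" using idn by (rule tendsto_vec_nth)
    then have "eventually (\<lambda>y. y $ i < 0) (nhds x)" using i by (rule order_tendstoD(2))
    then show ?thesis
    proof (rule eventually_mono)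
      fix y :: "real ^ 'n" assume "y $ i < 0"
      then have "y \<notin> nonneg_orthant" unfolding nonneg_orthant_def by (auto simp: not_le)
      then have "asymptotic_fun f y = \<infinity>" by (rule asym_out[OF sif])
      moreover have "c < \<infinity>" using c asym_out[OF sif False] by simp
      ultimately show "c < asymptotic_fun f y" by simp
    qed
  next
    case True
    have cL: "c < ereal (asL f x)" using c asym_in[OF sif True] by simp
    obtain t where t: "0 < t" "t < 1" "c < ereal (t * asL f x)"
      using exists_t[OF L_nonneg[OF sif True] cL] by blast
    show ?thesis using eventually_above[OF idn t(2)]
    proof (rule eventually_mono)
      fix y :: "real ^ 'n" assume ab: "\<forall>i. 0 < x $ i \<longrightarrow> t * x $ i < y $ i"
      show "c < asymptotic_fun f y"
      proof (cases "y \<in> nonneg_orthant")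
        case False
        have "ereal (t * asL f x) < \<infinity>" by simp
        with t(3) have "c < \<infinity>" by (rule order.strict_trans)
        then show ?thesis unfolding asym_out[OF sif False] .
      next
        case yO: True
        have "t *\<^sub>R x \<le> y" by (rule above_le[OF yO ab True])
        moreover have tx: "t *\<^sub>R x \<in> nonneg_orthant" using O_scale[OF True] t by simp
        ultimately have "asL f (t *\<^sub>R x) \<le> asL f y" using L_mono[OF sif yO tx] by blast
        then have "t * asL f x \<le> asL f y" using L_hom[OF sif True t(1)] by simp
        then show ?thesis using asym_in[OF sif yO] t(3) by (simp add: order_less_le_trans)
      qed
    qed
  qed
qed

lemma U1:
  assumes sif: "standard_interference f" and cont: "continuous_on nonneg_orthant f"
    and x: "x \<in> nonneg_orthant" and xs: "(xs \<longlongrightarrow> x) F"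
    and evO: "eventually (\<lambda>n. xs n \<in> nonneg_orthant) F" and r: "asL f x < r"
  obtains H where "0 < H" "eventually (\<lambda>n. real_of_ereal (f (H *\<^sub>R xs n)) / H < r) F"
proof -
  obtain H where H: "H > 0" "real_of_ereal (f (H *\<^sub>R x)) / H < r"
    using r unfolding asL_def by (subst (asm) cInf_less_iff) (auto intro: L_bdd[OF sif x])
  have c2: "continuous_on nonneg_orthant (\<lambda>y. f (H *\<^sub>R y))"
    by (rule continuous_on_compose2[OF cont]) (auto intro!: continuous_intros O_scale simp: H less_imp_le)
  have "((\<lambda>n. f (H *\<^sub>R xs n)) \<longlongrightarrow> f (H *\<^sub>R x)) F"
    by (rule continuous_on_tendsto_compose[OF c2 xs x evO])
  moreover have Hx: "H *\<^sub>R x \<in> nonneg_orthant" using O_scale[OF x] H by simp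
  define q where "q = real_of_ereal (f (H *\<^sub>R x))"
  have eq: "f (H *\<^sub>R x) = ereal q" unfolding q_def by (rule si_fin[OF sif Hx])
  have "q < r * H" using H unfolding q_def by (simp add: field_simps)
  then have "f (H *\<^sub>R x) < ereal (r * H)" unfolding eq by simp
  ultimately have ev: "eventually (\<lambda>n. f (H *\<^sub>R xs n) < ereal (r * H)) F" by (rule order_tendstoD(2))
  show thesis
  proof (rule that[OF H(1)])
    show "eventually (\<lambda>n. real_of_ereal (f (H *\<^sub>R xs n)) / H < r) F" using ev evO
    proof eventually_elim
      case (elim n)
      have Hy: "H *\<^sub>R xs n \<in> nonneg_orthant" using O_scale[OF elim(2)] H by simp
      define p where "p = real_of_ereal (f (H *\<^sub>R xs n))"
      have eq2: "f (H *\<^sub>R xs n) = ereal p" unfolding p_def by (rule si_fin[OF sif Hy])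
      have "p < r * H" using elim(1) unfolding eq2 by simp
      then show ?case unfolding p_def[symmetric] using H by (simp add: field_simps)
    qed
  qed
qed

lemma asym_cont:
  fixes f :: "real ^ 'n \<Rightarrow> ereal"
  assumes sif: "standard_interference f" and cont: "continuous_on nonneg_orthant f"
  shows "continuous_on nonneg_orthant (asymptotic_fun f)"
  unfolding continuous_on_def
proof
  fix x :: "real ^ 'n" assume x: "x \<in> nonneg_orthant"
  show "(asymptotic_fun f \<longlongrightarrow> asymptotic_fun f x) (at x within nonneg_orthant)"
  proof (rule order_tendstoI)
    fix a assume "a < asymptotic_fun f x"
    then have "eventually (\<lambda>y. a < asymptotic_fun f y) (nhds x)"
      using asym_lsc[OF sif] unfolding lower_semicontinuous_def by blast
    then show "eventually (\<lambda>y. a < asymptotic_fun f y) (at x within nonneg_orthant)"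
      by (rule filter_leD[OF at_within_le_nhds])
  next
    fix a assume "asymptotic_fun f x < a"
    then have "ereal (asL f x) < a" using asym_in[OF sif x] by simp
    then obtain r where r: "ereal (asL f x) < ereal r" "ereal r < a" using ereal_dense2 by blast
    have evO: "eventually (\<lambda>y. y \<in> nonneg_orthant) (at x within nonneg_orthant)"
      by (simp add: eventually_at_filter)
    obtain H where H: "0 < H" "eventually (\<lambda>y. real_of_ereal (f (H *\<^sub>R y)) / H < r) (at x within nonneg_orthant)"
      using U1[OF sif cont x tendsto_ident_at evO] r(1) by auto
    show "eventually (\<lambda>y. asymptotic_fun f y < a) (at x within nonneg_orthant)"
      using H(2) evO
    proof eventually_elim
      case (elim y)
      have "asL f y \<le> real_of_ereal (f (H *\<^sub>R y)) / H" by (rule L_le[OF sif elim(2) H(1)])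
      then have "asL f y < r" using elim(1) by simp
      then have "ereal (asL f y) < ereal r" by simp
      from this r(2) have "ereal (asL f y) < a" by (rule order.strict_trans)
      then show ?case unfolding asym_in[OF sif elim(2)] .
    qed
  qed
qed

lemma asym_seq:
  fixes f :: "real ^ 'n \<Rightarrow> ereal"
  assumes sif: "standard_interference f" and cont: "continuous_on nonneg_orthant f"
    and x: "x \<in> nonneg_orthant" and xsO: "\<forall>n. xs n \<in> nonneg_orthant" and hpos: "\<forall>n. 0 < h n"
    and xs: "xs \<longlonglongrightarrow> x" and h: "filterlim h at_top sequentially"
  shows "((\<lambda>n. f (h n *\<^sub>R xs n) / ereal (h n)) \<longlongrightarrow> asymptotic_fun f x) sequentially"
  unfolding asym_in[OF sif x]
proof (rule order_tendstoI)
  fix a assume "a < ereal (asL f x)"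
  then show "eventually (\<lambda>n. a < f (h n *\<^sub>R xs n) / ereal (h n)) sequentially"
    by (rule L_lower[OF sif x h xs])
next
  fix a assume "ereal (asL f x) < a"
  then obtain r where r: "ereal (asL f x) < ereal r" "ereal r < a" using ereal_dense2 by blast
  have evO: "eventually (\<lambda>n. xs n \<in> nonneg_orthant) sequentially" using xsO by simp
  obtain H where H: "0 < H" "eventually (\<lambda>n. real_of_ereal (f (H *\<^sub>R xs n)) / H < r) sequentially"
    using U1[OF sif cont x xs evO] r(1) by auto
  have evH: "eventually (\<lambda>n. H \<le> h n) sequentially" using h by (simp add: filterlim_at_top)
  show "eventually (\<lambda>n. f (h n *\<^sub>R xs n) / ereal (h n) < a) sequentially"
    using H(2) evH
  proof eventually_elim
    case (elim n)
    have "real_of_ereal (f (h n *\<^sub>R xs n)) / h n \<le> real_of_ereal (f (H *\<^sub>R xs n)) / H"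
      by (rule si_dec[OF sif xsO[rule_format] H(1) elim(2)])
    then have "real_of_ereal (f (h n *\<^sub>R xs n)) / h n < r" using elim(1) by simp
    then have "ereal (real_of_ereal (f (h n *\<^sub>R xs n)) / h n) < ereal r" by simp
    from this r(2) have "ereal (real_of_ereal (f (h n *\<^sub>R xs n)) / h n) < a" by (rule order.strict_trans)
    moreover have "h n *\<^sub>R xs n \<in> nonneg_orthant" using O_scale[OF xsO[rule_format]] hpos
      by (simp add: less_imp_le)
    ultimately show ?case using val_eq[OF sif _ hpos[rule_format]] by simp
  qed
qed

lemma aux_div: "0 < (h::real) \<Longrightarrow> u * A + v * B \<le> C \<Longrightarrow> u * (A / h) + v * (B / h) \<le> C / h"
proof -
  assume h: "0 < h" and le: "u * A + v * B \<le> C"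
  have "u * (A / h) + v * (B / h) = (u * A + v * B) / h" by (simp add: add_divide_distrib)
  also have "\<dots> \<le> C / h" using le h by (simp add: divide_right_mono)
  finally show ?thesis .
qed

lemma asym_concave:
  fixes f :: "real ^ 'n \<Rightarrow> ereal"
  assumes sif: "standard_interference f"
    and cc: "concave_on nonneg_orthant (\<lambda>x. real_of_ereal (f x))"
  shows "concave_on nonneg_orthant (\<lambda>x. real_of_ereal (asymptotic_fun f x))"
  unfolding concave_on_iff
proof (intro conjI O_convex ballI allI impI)
  fix x y :: "real ^ 'n" and u v :: real
  assume x: "x \<in> nonneg_orthant" and y: "y \<in> nonneg_orthant" and u: "0 \<le> u" and v: "0 \<le> v"
    and uv: "u + v = 1"
  have z: "u *\<^sub>R x + v *\<^sub>R y \<in> nonneg_orthant"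
    using O_convex x y u v uv unfolding convex_def by blast
  have "u * asL f x + v * asL f y \<le> asL f (u *\<^sub>R x + v *\<^sub>R y)"
  proof (rule tendsto_le[OF trivial_limit_at_top_linorder L_lim[OF sif z]])
    show "((\<lambda>h. u * (real_of_ereal (f (h *\<^sub>R x)) / h) + v * (real_of_ereal (f (h *\<^sub>R y)) / h))
       \<longlongrightarrow> u * asL f x + v * asL f y) at_top"
      by (intro tendsto_add tendsto_mult_left L_lim[OF sif x] L_lim[OF sif y])
    show "eventually (\<lambda>h. u * (real_of_ereal (f (h *\<^sub>R x)) / h) + v * (real_of_ereal (f (h *\<^sub>R y)) / h)
       \<le> real_of_ereal (f (h *\<^sub>R (u *\<^sub>R x + v *\<^sub>R y))) / h) at_top"
      using eventually_gt_at_top[of 0]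
    proof eventually_elim
      case (elim h)
      have hx: "h *\<^sub>R x \<in> nonneg_orthant" using O_scale[OF x] elim by simp
      have hy: "h *\<^sub>R y \<in> nonneg_orthant" using O_scale[OF y] elim by simp
      have eq: "h *\<^sub>R (u *\<^sub>R x + v *\<^sub>R y) = u *\<^sub>R (h *\<^sub>R x) + v *\<^sub>R (h *\<^sub>R y)"
        by (simp add: scaleR_add_right mult.commute)
      have "u * real_of_ereal (f (h *\<^sub>R x)) + v * real_of_ereal (f (h *\<^sub>R y))
          \<le> real_of_ereal (f (u *\<^sub>R (h *\<^sub>R x) + v *\<^sub>R (h *\<^sub>R y)))"
        using cc hx hy u v uv unfolding concave_on_iff by blast
      then have "u * real_of_ereal (f (h *\<^sub>R x)) + v * real_of_ereal (f (h *\<^sub>R y))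
          \<le> real_of_ereal (f (h *\<^sub>R (u *\<^sub>R x + v *\<^sub>R y)))" unfolding eq .
      then show ?case by (rule aux_div[OF elim])
    qed
  qed
  then show "u * real_of_ereal (asymptotic_fun f x) + v * real_of_ereal (asymptotic_fun f y)
      \<le> real_of_ereal (asymptotic_fun f (u *\<^sub>R x + v *\<^sub>R y))"
    by (simp add: asym_in[OF sif x] asym_in[OF sif y] asym_in[OF sif z])
qed

lemma asym_hom:
  fixes f :: "real ^ 'n \<Rightarrow> ereal"
  assumes sif: "standard_interference f"
  shows "positively_homogeneous (asymptotic_fun f)"
  unfolding positively_homogeneous_def
proof (intro allI impI)
  fix x :: "real ^ 'n" and \<alpha> :: real
  assume a: "0 < \<alpha>"
  show "asymptotic_fun f (\<alpha> *\<^sub>R x) = ereal \<alpha> * asymptotic_fun f x"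
  proof (cases "x \<in> nonneg_orthant")
    case True
    have ax: "\<alpha> *\<^sub>R x \<in> nonneg_orthant" using O_scale[OF True] a by simp
    show ?thesis unfolding asym_in[OF sif True] asym_in[OF sif ax] L_hom[OF sif True a] by simp
  next
    case False
    have ax: "\<alpha> *\<^sub>R x \<notin> nonneg_orthant"
    proof
      assume "\<alpha> *\<^sub>R x \<in> nonneg_orthant"
      then have "(1 / \<alpha>) *\<^sub>R (\<alpha> *\<^sub>R x) \<in> nonneg_orthant" by (rule O_scale) (use a in simp)
      then show False using False a by simp
    qed
    show ?thesis unfolding asym_out[OF sif False] asym_out[OF sif ax] using a by simp
  qed
qed

lemma asym_lim:
  fixes f :: "real ^ 'n \<Rightarrow> ereal"
  assumes sif: "standard_interference f" and x: "x \<in> nonneg_orthant"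
  shows "((\<lambda>h::real. f (h *\<^sub>R x) / ereal h) \<longlongrightarrow> asymptotic_fun f x) at_top"
  unfolding asym_in[OF sif x]
proof (rule Lim_transform_eventually[OF tendsto_ereal[OF L_lim[OF sif x]]])
  show "eventually (\<lambda>h. ereal (real_of_ereal (f (h *\<^sub>R x)) / h) = f (h *\<^sub>R x) / ereal h) at_top"
    using eventually_gt_at_top[of 0]
  proof eventually_elim
    case (elim h)
    have "h *\<^sub>R x \<in> nonneg_orthant" using O_scale[OF x] elim by simp
    then show ?case using val_eq[OF sif _ elim] by simp
  qed
qed

theorem proposition1:
  fixes f :: "real ^ 'n \<Rightarrow> ereal"
  assumes sif: "standard_interference f"
  shows
   "(\<forall>x \<in> nonneg_orthant.
        ((\<lambda>h::real. f (h *\<^sub>R x) / ereal h) \<longlongrightarrow> asymptotic_fun f x) at_top \<and>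
        0 \<le> asymptotic_fun f x \<and> asymptotic_fun f x < \<infinity>)
    \<and> lower_semicontinuous (asymptotic_fun f)
    \<and> positively_homogeneous (asymptotic_fun f)
    \<and> (continuous_on nonneg_orthant f \<longrightarrow> continuous_on nonneg_orthant (asymptotic_fun f))
    \<and> (\<forall>x1 \<in> nonneg_orthant. \<forall>x2 \<in> nonneg_orthant.
          x1 \<ge> x2 \<longrightarrow> asymptotic_fun f x2 \<le> asymptotic_fun f x1)
    \<and> (continuous_on nonneg_orthant f \<longrightarrow>
          (\<forall>x \<in> nonneg_orthant. \<forall>xs h.
             (\<forall>n. xs n \<in> nonneg_orthant) \<longrightarrow> (\<forall>n. 0 < h n) \<longrightarrow>
             xs \<longlonglongrightarrow> x \<longrightarrow> filterlim h at_top sequentially \<longrightarrow>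
             ((\<lambda>n. f (h n *\<^sub>R xs n) / ereal (h n)) \<longlongrightarrow> asymptotic_fun f x) sequentially))
    \<and> (concave_on nonneg_orthant (\<lambda>x. real_of_ereal (f x)) \<longrightarrow>
          concave_on nonneg_orthant (\<lambda>x. real_of_ereal (asymptotic_fun f x)))"
proof (intro conjI impI ballI allI)
  fix x :: "real ^ 'n" assume x: "x \<in> nonneg_orthant"
  show "((\<lambda>h::real. f (h *\<^sub>R x) / ereal h) \<longlongrightarrow> asymptotic_fun f x) at_top"
    by (rule asym_lim[OF sif x])
  show "0 \<le> asymptotic_fun f x" by (rule asym_nonneg[OF sif])
  show "asymptotic_fun f x < \<infinity>" unfolding asym_in[OF sif x] by simp
next
  show "lower_semicontinuous (asymptotic_fun f)" by (rule asym_lsc[OF sif])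
next
  show "positively_homogeneous (asymptotic_fun f)" by (rule asym_hom[OF sif])
next
  assume "continuous_on nonneg_orthant f"
  then show "continuous_on nonneg_orthant (asymptotic_fun f)" by (rule asym_cont[OF sif])
next
  fix x1 x2 :: "real ^ 'n"
  assume x1: "x1 \<in> nonneg_orthant" and x2: "x2 \<in> nonneg_orthant" and le: "x2 \<le> x1"
  show "asymptotic_fun f x2 \<le> asymptotic_fun f x1"
    unfolding asym_in[OF sif x1] asym_in[OF sif x2] using L_mono[OF sif x1 x2 le] by simp
next
  fix x :: "real ^ 'n" and xs :: "nat \<Rightarrow> real ^ 'n" and h :: "nat \<Rightarrow> real"
  assume "continuous_on nonneg_orthant f" "x \<in> nonneg_orthant" "\<forall>n. xs n \<in> nonneg_orthant"
    "\<forall>n. 0 < h n" "xs \<longlonglongrightarrow> x" "filterlim h at_top sequentially"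
  then show "((\<lambda>n. f (h n *\<^sub>R xs n) / ereal (h n)) \<longlongrightarrow> asymptotic_fun f x) sequentially"
    using asym_seq[OF sif] by blast
next
  assume "concave_on nonneg_orthant (\<lambda>x. real_of_ereal (f x))"
  then show "concave_on nonneg_orthant (\<lambda>x. real_of_ereal (asymptotic_fun f x))"
    by (rule asym_concave[OF sif])
qed

end
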